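(* Let $A$ be an event and $X,Y$ random variables with discrete distributions such that $X=P(A\mid X)$ and $Y=P(A\mid Y)$. Fix $0<\delta<\tfrac12$, and suppose that for each possible value $(x,y)$ of $(X,Y)$ (i.e. $P(X=x,Y=y)>0$) with $|y-x|\ge1-\delta$ there is no other such possible value $(x',y')$ with $|y'-x'|\ge 1-\delta$ and either $x'=x$ or $y'=y$. Then $$P(|Y-X|\ge1-\delta)\le\frac{2\delta}{1+\delta}.$$ *)

theory Defs
  imports "HOL-Probability.Probability"
begin

definition discrete_rv :: "'a measure \<Rightarrow> ('a \<Rightarrow> real) \<Rightarrow> bool" where
  "discrete_rv M X \<longleftrightarrow> (\<exists>S. countable S \<and> (AE \<omega> in M. X \<omega> \<in> S))"

text \<open>For discretely distributed X, the statement X = P(A | X) means that on every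
  atom {X = x} of positive probability, P(A | X = x) = x (elementary conditional
  probability, library notion cond_prob).\<close>
definition self_calibrated :: "'a measure \<Rightarrow> 'a set \<Rightarrow> ('a \<Rightarrow> real) \<Rightarrow> bool" where
  "self_calibrated M A X \<longleftrightarrow>
     (\<forall>x. measure M {\<omega> \<in> space M. X \<omega> = x} > 0 \<longrightarrow>
          cond_prob M (\<lambda>\<omega>. \<omega> \<in> A) (\<lambda>\<omega>. X \<omega> = x) = x)"

end

theory Submission
  imports Defs
begin
lemma alg_up:
  fixes p r s q x y d :: real
  assumes "p > 0" "r \<ge> 0" "s \<ge> 0" "d \<ge> 0"
   "q \<le> x * (p + r)" "y * (p + s) \<le> q + s" "0 \<le> q" "q \<le> p"
   "y - x \<ge> 1 - d"
  shows "(1 - d) * p \<le> d * (r + s)"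
proof -
  have pr: "p + r > 0" "p + s > 0" using assms by linarith+
  have x0: "x \<ge> 0"
  proof (rule ccontr)
    assume "\<not> x \<ge> 0"
    then have "x * (p + r) < 0" using pr by (simp add: mult_neg_pos)
    then show False using assms by linarith
  qed
  have "(x + 1 - d) * (p+s) \<le> y * (p+s)"
    using assms pr by (intro mult_right_mono) auto
  hence h: "(1-d)*(p+s) \<le> q + s - x*(p+s)" using assms by (simp add: algebra_simps)
  have ds: "d * s \<le> d * (r + s)" "d * r \<le> d * (r + s)" using assms by (simp_all add: mult_left_mono)
  show ?thesis
  proof (cases "r \<le> s")
    case True
    have "x*(p+r) \<le> x*(p+s)" using True x0 by (intro mult_left_mono) auto
    then have "(1-d)*(p+s) \<le> s" using h assms by linarith
    then have "(1 - d) * p \<le> d * s" by (simp add: algebra_simps)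
    then show ?thesis using ds by linarith
  next
    case False
    have hq: "q*(p+s) \<le> (x*(p+r))*(p+s)" using assms pr by (intro mult_right_mono) auto
    have hq2: "q*(r-s) \<le> p*(r-s)" using False assms by (intro mult_right_mono) auto
    have "(1-d)*(p+s)*(p+r) \<le> (q + s - x*(p+s))*(p+r)"
      using h pr by (intro mult_right_mono) auto
    also have "\<dots> = (q+s)*(p+r) - (x*(p+r))*(p+s)" by (simp add: algebra_simps)
    also have "\<dots> \<le> (q+s)*(p+r) - q*(p+s)" using hq by linarith
    also have "\<dots> = q*(r-s) + s*(p+r)" by (simp add: algebra_simps)
    also have "\<dots> \<le> p*(r-s) + s*(p+r)" using hq2 by linarith
    also have "\<dots> = r*(p+s)" by (simp add: algebra_simps)
    finally have "((1-d)*(p+r))*(p+s) \<le> r*(p+s)" by (simp add: algebra_simps)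
    hence "(1-d)*(p+r) \<le> r" using pr by (simp add: mult_le_cancel_right_pos)
    then have "(1 - d) * p \<le> d * r" by (simp add: algebra_simps)
    then show ?thesis using ds by linarith
  qed
qed

lemma alg:
  fixes p r s q QX QY x y d :: real
  assumes "p > 0" "r \<ge> 0" "s \<ge> 0" "d \<ge> 0"
   "q \<le> QX" "QX \<le> q + r" "q \<le> QY" "QY \<le> q + s" "0 \<le> q" "q \<le> p"
   "QX = x * (p + r)" "QY = y * (p + s)" "\<bar>y - x\<bar> \<ge> 1 - d"
  shows "(1 - d) * p \<le> d * (r + s)"
proof (cases "y - x \<ge> 1 - d")
  case True
  then show ?thesis using alg_up[of p r s d q x y] assms by auto
next
  case False
  then have "(1-y) - (1-x) \<ge> 1 - d" using assms by auto
  moreover have "(1-y)*(p+s) \<le> (p-q) + s" using assms by (simp add: algebra_simps)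
  moreover have "p - q \<le> (1-x)*(p+r)" using assms by (simp add: algebra_simps)
  ultimately show ?thesis
    using alg_up[of p r s d "p-q" "1-x" "1-y"] assms by auto
qed

lemma (in prob_space) pair_bound:
  fixes A :: "'a set" and X Y :: "'a \<Rightarrow> real"
  assumes "A \<in> sets M" "X \<in> borel_measurable M" "Y \<in> borel_measurable M"
    and "self_calibrated M A X" "self_calibrated M A Y"
    and pos: "prob {\<omega> \<in> space M. X \<omega> = x \<and> Y \<omega> = y} > 0"
    and far: "\<bar>y - x\<bar> \<ge> 1 - d" and d0: "0 \<le> d"
  shows "(1 - d) * prob {\<omega> \<in> space M. X \<omega> = x \<and> Y \<omega> = y} \<le>
     d * ((prob {\<omega> \<in> space M. X \<omega> = x} - prob {\<omega> \<in> space M. X \<omega> = x \<and> Y \<omega> = y})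
        + (prob {\<omega> \<in> space M. Y \<omega> = y} - prob {\<omega> \<in> space M. X \<omega> = x \<and> Y \<omega> = y}))"
proof -
  note [measurable] = assms(1,2,3)
  define At where "At = {\<omega> \<in> space M. X \<omega> = x \<and> Y \<omega> = y}"
  define Xe where "Xe = {\<omega> \<in> space M. X \<omega> = x}"
  define Ye where "Ye = {\<omega> \<in> space M. Y \<omega> = y}"
  define AX where "AX = {\<omega> \<in> space M. \<omega> \<in> A \<and> X \<omega> = x}"
  define AY where "AY = {\<omega> \<in> space M. \<omega> \<in> A \<and> Y \<omega> = y}"
  define Aa where "Aa = A \<inter> At"
  have m: "At \<in> sets M" "Xe \<in> sets M" "Ye \<in> sets M" "AX \<in> sets M" "AY \<in> sets M" "Aa \<in> sets M"
    unfolding At_def Xe_def Ye_def AX_def AY_def Aa_def by measurable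
  have sub: "At \<subseteq> Xe" "At \<subseteq> Ye" "Aa \<subseteq> AX" "Aa \<subseteq> AY" "Aa \<subseteq> At"
    "AX \<subseteq> Aa \<union> (Xe - At)" "AY \<subseteq> Aa \<union> (Ye - At)"
    unfolding At_def Xe_def Ye_def AX_def AY_def Aa_def by auto
  have pX: "prob Xe > 0" using pos finite_measure_mono[OF sub(1) m(2)] unfolding At_def by linarith
  have pY: "prob Ye > 0" using pos finite_measure_mono[OF sub(2) m(3)] unfolding At_def by linarith
  have "prob AX / prob Xe = x"
    using assms(4) pX unfolding self_calibrated_def cond_prob_def AX_def Xe_def by auto
  hence cX: "prob AX = x * prob Xe" using pX by (simp add: field_simps)
  have "prob AY / prob Ye = y"
    using assms(5) pY unfolding self_calibrated_def cond_prob_def AY_def Ye_def by auto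
  hence cY: "prob AY = y * prob Ye" using pY by (simp add: field_simps)
  have dX: "prob (Xe - At) = prob Xe - prob At" using finite_measure_Diff m sub by auto
  have dY: "prob (Ye - At) = prob Ye - prob At" using finite_measure_Diff m sub by auto
  have "prob AX \<le> prob (Aa \<union> (Xe - At))" using m sub by (intro finite_measure_mono) auto
  also have "\<dots> \<le> prob Aa + prob (Xe - At)" using m by (intro measure_Un_le) auto
  finally have u1: "prob AX \<le> prob Aa + (prob Xe - prob At)" using dX by simp
  have "prob AY \<le> prob (Aa \<union> (Ye - At))" using m sub by (intro finite_measure_mono) auto
  also have "\<dots> \<le> prob Aa + prob (Ye - At)" using m by (intro measure_Un_le) auto
  finally have u2: "prob AY \<le> prob Aa + (prob Ye - prob At)" using dY by simp
  have l1: "prob Aa \<le> prob AX" "prob Aa \<le> prob AY" "prob Aa \<le> prob At"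
    using m sub by (auto intro: finite_measure_mono)
  have "(1 - d) * prob At \<le> d * ((prob Xe - prob At) + (prob Ye - prob At))"
  proof (rule alg[where q="prob Aa" and QX="prob AX" and QY="prob AY" and x=x and y=y])
    show "0 < prob At" using pos unfolding At_def .
    show "0 \<le> prob Xe - prob At" using dX[symmetric] by simp
    show "0 \<le> prob Ye - prob At" using dY[symmetric] by simp
    show "prob Aa \<le> prob AX" "prob Aa \<le> prob AY" "prob Aa \<le> prob At" by (fact l1)+
    show "prob AX \<le> prob Aa + (prob Xe - prob At)" by (fact u1)
    show "prob AY \<le> prob Aa + (prob Ye - prob At)" by (fact u2)
    show "0 \<le> prob Aa" by simp
    show "prob AX = x * (prob At + (prob Xe - prob At))" using cX by simp
    show "prob AY = y * (prob At + (prob Ye - prob At))" using cY by simp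
    show "1 - d \<le> \<bar>y - x\<bar>" by (fact far)
    show "0 \<le> d" by (fact d0)
  qed
  then show ?thesis unfolding At_def Xe_def Ye_def .
qed

theorem lemma3p3:
  fixes M :: "'a measure" and A :: "'a set" and X Y :: "'a \<Rightarrow> real" and \<delta> :: real
  assumes "prob_space M"
    and "A \<in> sets M"
    and "X \<in> borel_measurable M" and "Y \<in> borel_measurable M"
    and "discrete_rv M X" and "discrete_rv M Y"
    and "self_calibrated M A X" and "self_calibrated M A Y"
    and "0 < \<delta>" and "\<delta> < 1/2"
    and "\<And>x y x' y'.
           measure M {\<omega> \<in> space M. X \<omega> = x \<and> Y \<omega> = y} > 0 \<Longrightarrow> \<bar>y - x\<bar> \<ge> 1 - \<delta> \<Longrightarrow>
           measure M {\<omega> \<in> space M. X \<omega> = x' \<and> Y \<omega> = y'} > 0 \<Longrightarrow> \<bar>y' - x'\<bar> \<ge> 1 - \<delta> \<Longrightarrow>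
           (x' = x \<or> y' = y) \<Longrightarrow> (x', y') = (x, y)"
  shows "measure M {\<omega> \<in> space M. \<bar>Y \<omega> - X \<omega>\<bar> \<ge> 1 - \<delta>} \<le> 2 * \<delta> / (1 + \<delta>)"
proof -
  interpret prob_space M by (fact assms(1))
  note [measurable] = assms(2,3,4)
  obtain SX where SX: "countable SX" "AE \<omega> in M. X \<omega> \<in> SX"
    using assms(5) unfolding discrete_rv_def by blast
  obtain SY where SY: "countable SY" "AE \<omega> in M. Y \<omega> \<in> SY"
    using assms(6) unfolding discrete_rv_def by blast
  define At where "At k = {\<omega> \<in> space M. X \<omega> = fst k \<and> Y \<omega> = snd k}" for k :: "real \<times> real"
  define Xe where "Xe k = {\<omega> \<in> space M. X \<omega> = fst k}" for k :: "real \<times> real"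
  define Ye where "Ye k = {\<omega> \<in> space M. Y \<omega> = snd k}" for k :: "real \<times> real"
  define Bd where "Bd = {k \<in> SX \<times> SY. prob (At k) > 0 \<and> \<bar>snd k - fst k\<bar> \<ge> 1 - \<delta>}"
  define Bp where "Bp = (\<Union>k\<in>Bd. At k)"
  define B where "B = {\<omega> \<in> space M. \<bar>Y \<omega> - X \<omega>\<bar> \<ge> 1 - \<delta>}"
  have mAt[measurable]: "At k \<in> sets M" for k unfolding At_def by measurable
  have mXe[measurable]: "Xe k \<in> sets M" for k unfolding Xe_def by measurable
  have mYe[measurable]: "Ye k \<in> sets M" for k unfolding Ye_def by measurable
  have cBd: "countable Bd" unfolding Bd_def using SX SY
    by (intro countable_subset[OF _ countable_SIGMA[of SX "\<lambda>_. SY"]]) auto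
  have mBp: "Bp \<in> sets M" unfolding Bp_def using cBd by (intro sets.countable_UN'') auto
  have uniq: "k' = k" if "k \<in> Bd" "k' \<in> Bd" "fst k' = fst k \<or> snd k' = snd k" for k k'
  proof -
    have "(fst k', snd k') = (fst k, snd k)"
      using that assms(11)[of "fst k" "snd k" "fst k'" "snd k'"]
      unfolding Bd_def At_def by auto
    then show ?thesis by (simp add: prod_eq_iff)
  qed
  have pb: "(1 - \<delta>) * prob (At k) \<le> \<delta> * ((prob (Xe k) - prob (At k)) + (prob (Ye k) - prob (At k)))"
    if "k \<in> Bd" for k
    using pair_bound[OF assms(2,3,4,7,8), of "fst k" "snd k" \<delta>] that assms(9)
    unfolding Bd_def At_def Xe_def Ye_def by auto
  have fin: "(1 - \<delta>) * prob (\<Union>k\<in>F. At k) \<le> 2 * \<delta> * (1 - prob Bp)"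
    if F: "finite F" "F \<subseteq> Bd" for F
  proof -
    have dAt: "disjoint_family_on At F" unfolding disjoint_family_on_def At_def by auto
    have dX: "disjoint_family_on (\<lambda>k. Xe k - At k) F"
      unfolding disjoint_family_on_def
    proof (intro ballI impI)
      fix m n assume "m \<in> F" "n \<in> F" "m \<noteq> n"
      then have "fst m \<noteq> fst n" using uniq F by blast
      then show "(Xe m - At m) \<inter> (Xe n - At n) = {}" unfolding Xe_def by auto
    qed
    have dY: "disjoint_family_on (\<lambda>k. Ye k - At k) F"
      unfolding disjoint_family_on_def
    proof (intro ballI impI)
      fix m n assume "m \<in> F" "n \<in> F" "m \<noteq> n"
      then have "snd m \<noteq> snd n" using uniq F by blast
      then show "(Ye m - At m) \<inter> (Ye n - At n) = {}" unfolding Ye_def by auto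
    qed
    have sX: "(\<Union>k\<in>F. Xe k - At k) \<subseteq> space M - Bp"
    proof
      fix \<omega> assume "\<omega> \<in> (\<Union>k\<in>F. Xe k - At k)"
      then obtain k where k: "k \<in> F" "\<omega> \<in> Xe k" "\<omega> \<notin> At k" by auto
      show "\<omega> \<in> space M - Bp"
      proof
        show "\<omega> \<in> space M" using k unfolding Xe_def by auto
        show "\<omega> \<notin> Bp"
        proof
          assume "\<omega> \<in> Bp"
          then obtain k' where k': "k' \<in> Bd" "\<omega> \<in> At k'" unfolding Bp_def by auto
          then have "fst k' = fst k" using k unfolding At_def Xe_def by auto
          then have "k' = k" using uniq k' k F by blast
          then show False using k k' by simp
        qed
      qed
    qed
    have sY: "(\<Union>k\<in>F. Ye k - At k) \<subseteq> space M - Bp"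
    proof
      fix \<omega> assume "\<omega> \<in> (\<Union>k\<in>F. Ye k - At k)"
      then obtain k where k: "k \<in> F" "\<omega> \<in> Ye k" "\<omega> \<notin> At k" by auto
      show "\<omega> \<in> space M - Bp"
      proof
        show "\<omega> \<in> space M" using k unfolding Ye_def by auto
        show "\<omega> \<notin> Bp"
        proof
          assume "\<omega> \<in> Bp"
          then obtain k' where k': "k' \<in> Bd" "\<omega> \<in> At k'" unfolding Bp_def by auto
          then have "snd k' = snd k" using k unfolding At_def Ye_def by auto
          then have "k' = k" using uniq k' k F by blast
          then show False using k k' by simp
        qed
      qed
    qed
    have subXA: "At k \<subseteq> Xe k" "At k \<subseteq> Ye k" for k unfolding At_def Xe_def Ye_def by auto
    have e1: "prob (\<Union>k\<in>F. At k) = (\<Sum>k\<in>F. prob (At k))"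
      using F dAt by (intro measure_finite_Union) auto
    have e2: "prob (\<Union>k\<in>F. Xe k - At k) = (\<Sum>k\<in>F. prob (Xe k) - prob (At k))"
      using F dX by (subst measure_finite_Union) (auto simp: finite_measure_Diff subXA)
    have e3: "prob (\<Union>k\<in>F. Ye k - At k) = (\<Sum>k\<in>F. prob (Ye k) - prob (At k))"
      using F dY by (subst measure_finite_Union) (auto simp: finite_measure_Diff subXA)
    have cB: "prob (space M - Bp) = 1 - prob Bp" using prob_compl mBp by simp
    have i2: "(\<Sum>k\<in>F. prob (Xe k) - prob (At k)) \<le> 1 - prob Bp"
      unfolding e2[symmetric] cB[symmetric]
      using sX F mBp by (intro finite_measure_mono) auto
    have i3: "(\<Sum>k\<in>F. prob (Ye k) - prob (At k)) \<le> 1 - prob Bp"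
      unfolding e3[symmetric] cB[symmetric]
      using sY F mBp by (intro finite_measure_mono) auto
    have "(1 - \<delta>) * prob (\<Union>k\<in>F. At k) = (\<Sum>k\<in>F. (1 - \<delta>) * prob (At k))"
      by (simp add: e1 sum_distrib_left)
    also have "\<dots> \<le> (\<Sum>k\<in>F. \<delta> * ((prob (Xe k) - prob (At k)) + (prob (Ye k) - prob (At k))))"
      using F pb by (intro sum_mono) auto
    also have "\<dots> = \<delta> * ((\<Sum>k\<in>F. prob (Xe k) - prob (At k)) + (\<Sum>k\<in>F. prob (Ye k) - prob (At k)))"
      by (simp only: sum_distrib_left[symmetric] sum.distrib[symmetric])
    also have "\<dots> \<le> \<delta> * ((1 - prob Bp) + (1 - prob Bp))"
      using i2 i3 assms(9) by (intro mult_left_mono) auto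
    finally show ?thesis by (simp add: algebra_simps)
  qed
  have key: "(1 - \<delta>) * prob Bp \<le> 2 * \<delta> * (1 - prob Bp)"
  proof (cases "Bd = {}")
    case True
    then show ?thesis using fin[of "{}"] unfolding Bp_def by simp
  next
    case False
    define C where "C n = (\<Union>k\<in>from_nat_into Bd ` {..<n}. At k)" for n
    have Csub: "from_nat_into Bd ` {..<n} \<subseteq> Bd" for n using False from_nat_into by blast
    have "incseq C" unfolding C_def incseq_def by (auto intro: less_le_trans)
    moreover have "range C \<subseteq> sets M" unfolding C_def by auto
    ultimately have lim: "(\<lambda>n. prob (C n)) \<longlonglongrightarrow> prob (\<Union>n. C n)"
      by (intro finite_Lim_measure_incseq) auto
    have "(\<Union>n. C n) = Bp"
    proof
      show "(\<Union>n. C n) \<subseteq> Bp" unfolding C_def Bp_def using Csub by blast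
      show "Bp \<subseteq> (\<Union>n. C n)"
      proof
        fix \<omega> assume "\<omega> \<in> Bp"
        then obtain k where k: "k \<in> Bd" "\<omega> \<in> At k" unfolding Bp_def by auto
        then obtain i where "k = from_nat_into Bd i"
          using range_from_nat_into[OF False cBd] by (metis rangeE)
        then have "\<omega> \<in> C (Suc i)" unfolding C_def using k by auto
        then show "\<omega> \<in> (\<Union>n. C n)" by blast
      qed
    qed
    with lim have lim2: "(\<lambda>n. (1 - \<delta>) * prob (C n)) \<longlonglongrightarrow> (1 - \<delta>) * prob Bp"
      by (intro tendsto_mult tendsto_const) auto
    have "(1 - \<delta>) * prob (C n) \<le> 2 * \<delta> * (1 - prob Bp)" for n
      unfolding C_def by (rule fin) (use Csub in auto)
    then show ?thesis
      by (intro LIMSEQ_le_const2[OF lim2]) blast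
  qed
  have Bsub: "prob B \<le> prob Bp"
  proof (rule finite_measure_mono_AE)
    show "Bp \<in> sets M" by (fact mBp)
    have null: "AE \<omega> in M. \<forall>k\<in>SX \<times> SY. prob (At k) = 0 \<longrightarrow> \<omega> \<notin> At k"
    proof (rule AE_ball_countable')
      fix k assume "k \<in> SX \<times> SY"
      show "AE \<omega> in M. prob (At k) = 0 \<longrightarrow> \<omega> \<notin> At k"
      proof (cases "prob (At k) = 0")
        case True
        then have "At k \<in> null_sets M" using mAt by (simp add: emeasure_eq_measure null_sets_def)
        then show ?thesis by (rule AE_mp[OF AE_not_in]) auto
      qed auto
    next
      show "countable (SX \<times> SY)" using SX SY by auto
    qed
    show "AE \<omega> \<in> B in M. \<omega> \<in> Bp"
      using null SX(2) SY(2)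
    proof (eventually_elim)
      case (elim \<omega>)
      show ?case
      proof
        assume "\<omega> \<in> B"
        then have w: "\<omega> \<in> space M" "\<bar>Y \<omega> - X \<omega>\<bar> \<ge> 1 - \<delta>" unfolding B_def by auto
        define k where "k = (X \<omega>, Y \<omega>)"
        have kS: "k \<in> SX \<times> SY" using elim unfolding k_def by auto
        have wk: "\<omega> \<in> At k" using w unfolding At_def k_def by auto
        have "prob (At k) \<noteq> 0" using elim kS wk by blast
        then have "prob (At k) > 0" using measure_nonneg[of M "At k"] by linarith
        then have "k \<in> Bd" using kS w unfolding Bd_def k_def by auto
        then show "\<omega> \<in> Bp" using wk unfolding Bp_def by auto
      qed
    qed
  qed
  have "(1 + \<delta>) * prob Bp \<le> 2 * \<delta>" using key by (simp add: algebra_simps)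
  then have "prob Bp \<le> 2 * \<delta> / (1 + \<delta>)" using assms(9) by (simp add: pos_le_divide_eq mult.commute)
  then show ?thesis using Bsub unfolding B_def by simp
qed
end
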